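(* Let $U$ be a $d\times d$ complex matrix, and define $\mathfrak{C}_{\mathbf{ab}}(U)=\frac{1}{d}\operatorname{tr}\big(D_{\mathbf a}^\dagger U D_{\mathbf b} U^\dagger\big)$ and $\mathfrak{D}_{\mathbf{ab}}(U)=|\mathfrak{C}_{\mathbf{ab}}(U)|^2$ for $\mathbf a,\mathbf b\in\mathbb{Z}_{d_L}^{2n}$. Then the $d^2\times d^2$ matrix $\mathfrak{D}(U)=(\mathfrak{D}_{\mathbf{ab}}(U))_{\mathbf a,\mathbf b}$ is bistochastic (nonnegative with all row sums and all column sums equal to $1$) if and only if $U$ is unitary.
   Context: Let $d_L\ge 2$ and $n\ge1$ be integers and $d=d_L^n$. On $\mathbb{C}^{d_L}$ with computational basis $\{|k\rangle\}_{k\in\mathbb{Z}_{d_L}}$, let $Z|k\rangle=\omega^k|k\rangle$, $X|k\rangle=|k+1\rangle$ (arithmetic mod $d_L$), $\omega=e^{2\pi i/d_L}$, $\tau=-e^{i\pi/d_L}$, and for $(a_1,a_2)\in\mathbb{Z}_{d_L}^2$ set $D_{(a_1,a_2)}=\tau^{a_1a_2}X^{a_1}Z^{a_2}$. For $\mathbf a=\mathbf a_1\oplus\cdots\oplus\mathbf a_n\in\mathbb{Z}_{d_L}^{2n}$ (each $\mathbf a_i\in\mathbb{Z}_{d_L}^2$), the displacement operator on $(\mathbb{C}^{d_L})^{\otimes n}\cong\mathbb{C}^d$ is $D_{\mathbf a}=D_{\mathbf a_1}\otimes\cdots\otimes D_{\mathbf a_n}$. (The case $n=1$ is the single-qudit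 Weyl–Heisenberg group.) *)

theory Defs
  imports "HOL-Library.FuncSet" "Jordan_Normal_Form.Schur_Decomposition"
begin

definition omega :: "nat \<Rightarrow> complex" where
  "omega dL = exp (2 * pi * \<i> / of_nat dL)"

definition tau :: "nat \<Rightarrow> complex" where
  "tau dL = - exp (pi * \<i> / of_nat dL)"

(* Matrix entry <j| D_(a1,a2) |k> of D_(a1,a2) = tau^(a1 a2) X^a1 Z^a2,
   with a1, a2 represented by their canonical representatives in {0..<dL}:
   X^a1 Z^a2 |k> = omega^(a2 k) |k + a1 mod dL>. *)
definition Dq_entry :: "nat \<Rightarrow> nat \<times> nat \<Rightarrow> nat \<Rightarrow> nat \<Rightarrow> complex" where
  "Dq_entry dL a j k =
     (if j = (k + fst a) mod dL
      then tau dL ^ (fst a * snd a) * omega dL ^ (snd a * k) else 0)"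

(* Digit of basis index k in {0..<dL^n} belonging to tensor factor i (i < n);
   factor 0 is the most significant digit: |k> = |k_0> (x) ... (x) |k_(n-1)>. *)
definition digit :: "nat \<Rightarrow> nat \<Rightarrow> nat \<Rightarrow> nat \<Rightarrow> nat" where
  "digit dL n i k = (k div dL ^ (n - 1 - i)) mod dL"

(* Index set Z_dL^(2n): a = a_0 (+) ... (+) a_(n-1), each a_i in Z_dL^2. *)
definition phase_points :: "nat \<Rightarrow> nat \<Rightarrow> (nat \<Rightarrow> nat \<times> nat) set" where
  "phase_points dL n = {0..<n} \<rightarrow>\<^sub>E ({0..<dL} \<times> {0..<dL})"

(* Displacement operator D_a = D_(a_0) (x) ... (x) D_(a_(n-1)) as a d x d matrix, d = dL^n. *)
definition displacement :: "nat \<Rightarrow> nat \<Rightarrow> (nat \<Rightarrow> nat \<times> nat) \<Rightarrow> complex mat" where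
  "displacement dL n a = mat (dL ^ n) (dL ^ n)
     (\<lambda>(j, k). \<Prod>i<n. Dq_entry dL (a i) (digit dL n i j) (digit dL n i k))"

definition mat_trace :: "complex mat \<Rightarrow> complex" where
  "mat_trace A = (\<Sum>i<dim_row A. A $$ (i, i))"

definition frakC :: "nat \<Rightarrow> nat \<Rightarrow> complex mat \<Rightarrow> (nat \<Rightarrow> nat \<times> nat) \<Rightarrow> (nat \<Rightarrow> nat \<times> nat) \<Rightarrow> complex" where
  "frakC dL n U a b = mat_trace (mat_adjoint (displacement dL n a) * U * displacement dL n b * mat_adjoint U)
                       / of_nat (dL ^ n)"

definition frakD :: "nat \<Rightarrow> nat \<Rightarrow> complex mat \<Rightarrow> (nat \<Rightarrow> nat \<times> nat) \<Rightarrow> (nat \<Rightarrow> nat \<times> nat) \<Rightarrow> real" where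
  "frakD dL n U a b = (cmod (frakC dL n U a b))\<^sup>2"

definition bistochastic :: "'i set \<Rightarrow> ('i \<Rightarrow> 'i \<Rightarrow> real) \<Rightarrow> bool" where
  "bistochastic I M \<longleftrightarrow>
     (\<forall>a\<in>I. \<forall>b\<in>I. M a b \<ge> 0) \<and>
     (\<forall>a\<in>I. (\<Sum>b\<in>I. M a b) = 1) \<and>
     (\<forall>b\<in>I. (\<Sum>a\<in>I. M a b) = 1)"

definition unitary_mat :: "complex mat \<Rightarrow> bool" where
  "unitary_mat U \<longleftrightarrow> (\<exists>d. U \<in> carrier_mat d d \<and>
      U * mat_adjoint U = 1\<^sub>m d \<and> mat_adjoint U * U = 1\<^sub>m d)"

end

theory Submission
  imports Defs
begin


lemma mult_entry:
  assumes "A \<in> carrier_mat m k" "B \<in> carrier_mat k m'" "i < m" "j < m'"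
  shows "(A * B) $$ (i, j) = (\<Sum>x<k. A $$ (i, x) * B $$ (x, j))"
  using assms by (simp add: scalar_prod_def atLeast0LessThan)

lemma adj_carrier: "A \<in> carrier_mat m k \<Longrightarrow> mat_adjoint A \<in> carrier_mat k m"
  by (simp add: mat_adjoint_def mat_of_rows_def)

lemma adj_entry:
  assumes "A \<in> carrier_mat m k" "i < k" "j < m"
  shows "mat_adjoint A $$ (i, j) = cnj (A $$ (j, i))"
  using assms by (simp add: mat_adjoint_def mat_of_rows_index)

lemma cnj_mult_unit: "cmod z = 1 \<Longrightarrow> cnj z * z = 1"
  by (metis complex_norm_square mult.commute of_real_1 power_one)

lemma omega_cnj: "cnj (omega dL) * omega dL = 1"
  unfolding omega_def by (rule cnj_mult_unit) (simp add: norm_exp_eq_Re)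

lemma tau_cnj: "cnj (tau dL) * tau dL = 1"
  unfolding tau_def by (rule cnj_mult_unit) (simp add: norm_exp_eq_Re)



declare complex_cnj_power[simp del]

lemma omega_pow: "dL > 0 \<Longrightarrow> omega dL ^ m = cis (2 * pi * real m / real dL)"
proof -
  assume "dL > 0"
  have "omega dL = cis (2 * pi / real dL)"
    unfolding omega_def cis_conv_exp by (simp add: mult.commute)
  then show ?thesis by (simp add: DeMoivre field_simps)
qed

lemma omega_pow_dL: "dL > 0 \<Longrightarrow> omega dL ^ dL = 1"
  by (simp add: omega_pow complex_eq_iff)

lemma omega_pow_ne1: assumes "0 < m" "m < dL" shows "omega dL ^ m \<noteq> 1"
proof
  assume h: "omega dL ^ m = 1"
  have "cos (2 * pi * real m / real dL) = 1"
    using arg_cong[OF h, of Re] assms by (simp add: omega_pow)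
  then obtain k :: int where k: "2 * pi * real m / real dL = real_of_int k * 2 * pi"
    by (auto simp: cos_one_2pi_int)
  have "real m / real dL = real_of_int k" using k assms by (simp add: field_simps)
  moreover have "0 < real m / real dL" "real m / real dL < 1" using assms by auto
  ultimately show False by (metis of_int_0_less_iff of_int_less_1_iff not_less zero_less_one_class.zero_le_one less_le_trans int_one_le_iff_zero_less le_less)
qed

lemma zeta_sum:
  assumes "dL > 0" "j < dL" "l < dL"
  shows "(\<Sum>y\<in>{0..<dL}. (cnj (omega dL ^ j) * omega dL ^ l) ^ y) = (if j = l then of_nat dL else 0)"
proof (cases "j = l")
  case True
  have "cnj (omega dL ^ j) * omega dL ^ j = 1"
    by (metis omega_cnj complex_cnj_power power_mult_distrib power_one)
  then show ?thesis using True by simp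
next
  case False
  let ?z = "cnj (omega dL ^ j) * omega dL ^ l"
  have c1: "cnj (omega dL) ^ dL = 1"
    by (metis complex_cnj_power omega_pow_dL complex_cnj_one assms(1))
  have p1: "(omega dL ^ l) ^ dL = 1"
    by (metis omega_pow_dL assms(1) power_mult mult.commute power_one)
  have p2: "(cnj (omega dL ^ j)) ^ dL = 1"
    by (metis complex_cnj_power complex_cnj_one omega_pow_dL assms(1) power_mult mult.commute power_one)
  have zn: "?z ^ dL = 1" by (simp add: power_mult_distrib p1 p2)
  have w1: "cnj (omega dL ^ m) * omega dL ^ m = 1" for m
    by (metis omega_cnj complex_cnj_power power_mult_distrib power_one)
  have "?z \<noteq> 1"
  proof
    assume z1: "?z = 1"
    show False
    proof (cases "j < l")
      case True
      have "?z = cnj (omega dL ^ j) * omega dL ^ j * omega dL ^ (l - j)"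
        using True by (simp add: mult.assoc flip: power_add)
      then have "omega dL ^ (l - j) = 1" using z1 w1 by simp
      then show False using omega_pow_ne1[of "l - j" dL] True assms by simp
    next
      case False
      then have lj: "l < j" using \<open>j \<noteq> l\<close> by simp
      have oj: "omega dL ^ j = omega dL ^ (j - l) * omega dL ^ l"
        using lj by (metis power_add le_add_diff_inverse2 less_imp_le)
      have "?z = cnj (omega dL ^ (j - l)) * (cnj (omega dL ^ l) * omega dL ^ l)"
        by (subst oj) (simp only: complex_cnj_mult mult.assoc)
      then have "cnj (omega dL ^ (j - l)) = 1" using z1 w1 by simp
      then have "omega dL ^ (j - l) = 1" by (metis complex_cnj_one complex_cnj_cnj)
      then show False using omega_pow_ne1[of "j - l" dL] lj assms by simp
    qed
  qed
  then have "(\<Sum>y<dL. ?z ^ y) = 0" using zn by (simp add: sum_gp_strict)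
  then show ?thesis using False by (simp add: atLeast0LessThan)
qed

lemma Dq_prod:
  "cnj (Dq_entry dL x i j) * Dq_entry dL x k l =
     (if i = (j + fst x) mod dL \<and> k = (l + fst x) mod dL
      then (cnj (omega dL ^ j) * omega dL ^ l) ^ snd x else 0)"
proof -
  have "cnj (tau dL ^ (fst x * snd x) * omega dL ^ (snd x * j)) *
          (tau dL ^ (fst x * snd x) * omega dL ^ (snd x * l))
        = (cnj (tau dL) * tau dL) ^ (fst x * snd x) * (cnj (omega dL ^ j) * omega dL ^ l) ^ snd x"
    by (simp add: power_mult_distrib mult.commute[of "snd x"] power_mult mult_ac complex_cnj_power)
  then show ?thesis unfolding Dq_entry_def by (simp add: tau_cnj)
qed

lemma Dq_CR:
  assumes "dL > 0" "i < dL" "j < dL" "k < dL" "l < dL"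
  shows "(\<Sum>x\<in>{0..<dL} \<times> {0..<dL}. cnj (Dq_entry dL x i j) * Dq_entry dL x k l)
         = (if i = k \<and> j = l then of_nat dL else 0)"
proof -
  let ?z = "cnj (omega dL ^ j) * omega dL ^ l"
  have "(\<Sum>x\<in>{0..<dL} \<times> {0..<dL}. cnj (Dq_entry dL x i j) * Dq_entry dL x k l)
      = (\<Sum>a\<in>{0..<dL}. \<Sum>b\<in>{0..<dL}. (if i = (j + a) mod dL \<and> k = (l + a) mod dL then ?z ^ b else 0))"
    by (simp add: Dq_prod sum.cartesian_product case_prod_beta)
  also have "\<dots> = (\<Sum>a\<in>{0..<dL}. (if i = (j + a) mod dL \<and> k = (l + a) mod dL then (if j = l then of_nat dL else 0) else 0))"
  proof (intro sum.cong refl)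
    fix a
    show "(\<Sum>b\<in>{0..<dL}. (if i = (j + a) mod dL \<and> k = (l + a) mod dL then ?z ^ b else 0))
      = (if i = (j + a) mod dL \<and> k = (l + a) mod dL then (if j = l then of_nat dL else 0) else 0)"
    proof (cases "i = (j + a) mod dL \<and> k = (l + a) mod dL")
      case True
      then show ?thesis using zeta_sum[OF assms(1,3,5)] by simp
    next
      case False
      then show ?thesis by (simp only: if_not_P[OF False] if_False sum.neutral_const)
    qed
  qed
  also have "\<dots> = (if i = k \<and> j = l then of_nat dL else 0)"
  proof (cases "j = l")
    case True
    have X1: "a = (i + dL - j) mod dL" if "a \<in> {0..<dL}" "i = (j + a) mod dL" for a
      proof -
      from that have a: "a < dL" "i = (j + a) mod dL" by auto
      show "a = (i + dL - j) mod dL"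
      proof (cases "j + a < dL")
        case True
        then have "i = j + a" using a by simp
        then have "i + dL - j = a + dL" by simp
        then show ?thesis using a by simp
      next
        case False
        then have "i = (j + a - dL) mod dL" using a le_mod_geq[of dL "j + a"] by simp
        also have "\<dots> = j + a - dL" using a assms by simp
        finally have "i + dL - j = a" using False by simp
        then show ?thesis using a by simp
      qed
      qed
      have "(j + (i + dL - j) mod dL) mod dL = (j + (i + dL - j)) mod dL"
        by (rule mod_add_right_eq)
      also have "j + (i + dL - j) = i + dL" using assms by simp
      finally have X2: "i = (j + (i + dL - j) mod dL) mod dL" using assms by simp
    have S1: "{a \<in> {0..<dL}. i = (j + a) mod dL} = {(i + dL - j) mod dL}"
      using X1 X2 assms by auto
    have H: "(\<Sum>a\<in>{0..<dL}. (if i = (j + a) mod dL \<and> k = (j + a) mod dL then of_nat dL else 0))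
        = (if i = k then (of_nat dL :: complex) else 0)"
    proof (cases "i = k")
      case True
      have "(\<Sum>a\<in>{0..<dL}. (if i = (j + a) mod dL \<and> k = (j + a) mod dL then of_nat dL else (0::complex)))
          = (\<Sum>a\<in>{a \<in> {0..<dL}. i = (j + a) mod dL}. of_nat dL)"
        using True by (simp add: sum.inter_filter[symmetric])
      then show ?thesis using True S1 by simp
    next
      case False
      then show ?thesis by (intro trans[OF sum.neutral]) auto
    qed
    have "(\<Sum>a\<in>{0..<dL}. (if i = (j + a) mod dL \<and> k = (l + a) mod dL then (if j = l then of_nat dL else 0) else 0))
       = (\<Sum>a\<in>{0..<dL}. (if i = (j + a) mod dL \<and> k = (j + a) mod dL then of_nat dL else (0::complex)))"
      using True by (intro sum.cong) auto
    also have "\<dots> = (if i = k then of_nat dL else 0)" by (rule H)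
    also have "\<dots> = (if i = k \<and> j = l then of_nat dL else 0)" using True by simp
    finally show ?thesis .
  next
    case False
    then show ?thesis by simp
  qed
  finally show ?thesis .
qed



definition Dm :: "nat \<Rightarrow> nat \<Rightarrow> (nat \<Rightarrow> nat \<times> nat) \<Rightarrow> nat \<Rightarrow> nat \<Rightarrow> complex" where
  "Dm dL n a i j = (\<Prod>t<n. Dq_entry dL (a t) (digit dL n t i) (digit dL n t j))"

lemma displacement_carrier: "displacement dL n a \<in> carrier_mat (dL ^ n) (dL ^ n)"
  by (simp add: displacement_def)

lemma displacement_entry: "i < dL ^ n \<Longrightarrow> j < dL ^ n \<Longrightarrow> displacement dL n a $$ (i, j) = Dm dL n a i j"
  by (simp add: displacement_def Dm_def)

lemma digit_lt: "0 < dL \<Longrightarrow> digit dL n t k < dL"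
  by (simp add: digit_def)

lemma mod_pow_eq:
  fixes i k dL :: nat
  assumes "\<forall>e<m. (i div dL ^ e) mod dL = (k div dL ^ e) mod dL"
  shows "i mod dL ^ m = k mod dL ^ m"
  using assms
proof (induction m)
  case 0 then show ?case by simp
next
  case (Suc m)
  have "i mod dL ^ Suc m = dL ^ m * (i div dL ^ m mod dL) + i mod dL ^ m"
    by (metis mod_mult2_eq power_Suc2)
  moreover have "k mod dL ^ Suc m = dL ^ m * (k div dL ^ m mod dL) + k mod dL ^ m"
    by (metis mod_mult2_eq power_Suc2)
  ultimately show ?case using Suc by simp
qed

lemma digits_inj:
  assumes "i < dL ^ n" "k < dL ^ n" "\<forall>t<n. digit dL n t i = digit dL n t k"
  shows "i = k"
proof -
  have "\<forall>e<n. (i div dL ^ e) mod dL = (k div dL ^ e) mod dL"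
  proof (intro allI impI)
    fix e assume e: "e < n"
    have "n - 1 - (n - 1 - e) = e" using e by simp
    then show "(i div dL ^ e) mod dL = (k div dL ^ e) mod dL"
      using assms(3)[rule_format, of "n - 1 - e"] e unfolding digit_def by simp
  qed
  then have "i mod dL ^ n = k mod dL ^ n" by (rule mod_pow_eq)
  then show ?thesis using assms by simp
qed

definition digs :: "nat \<Rightarrow> nat \<Rightarrow> nat \<Rightarrow> nat \<Rightarrow> nat" where
  "digs dL n k = restrict (\<lambda>t. digit dL n t k) {0..<n}"

lemma digs_bij:
  assumes "0 < dL"
  shows "bij_betw (digs dL n) {0..<dL ^ n} (PiE {0..<n} (\<lambda>_. {0..<dL}))"
proof -
  have inj: "inj_on (digs dL n) {0..<dL ^ n}"
  proof
    fix x y assume "x \<in> {0..<dL ^ n}" "y \<in> {0..<dL ^ n}" "digs dL n x = digs dL n y"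
    then show "x = y"
      using digits_inj[of x dL n y] unfolding digs_def
      by (metis atLeastLessThan_iff restrict_apply' zero_le)
  qed
  have sub: "digs dL n ` {0..<dL ^ n} \<subseteq> PiE {0..<n} (\<lambda>_. {0..<dL})"
    using assms by (auto simp: digs_def digit_lt)
  have "card (digs dL n ` {0..<dL ^ n}) = dL ^ n"
    using inj by (simp add: card_image)
  also have "\<dots> = card (PiE {0..<n} (\<lambda>_. {0..<dL}))"
    by (simp add: card_PiE)
  finally have "digs dL n ` {0..<dL ^ n} = PiE {0..<n} (\<lambda>_. {0..<dL})"
    using sub by (intro card_subset_eq) (auto simp: finite_PiE)
  then show ?thesis using inj by (simp add: bij_betw_def)
qed

lemma prod_if_const:
  assumes "finite A"
  shows "(\<Prod>t\<in>A. (if P t then c else 0)) = (if (\<forall>t\<in>A. P t) then c ^ card A else (0::complex))"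
proof (cases "\<forall>t\<in>A. P t")
  case True
  then show ?thesis by simp
next
  case False
  then obtain t where "t \<in> A" "\<not> P t" by auto
  then show ?thesis using assms False by (intro trans[OF prod_zero]) auto
qed

lemma Dm_CR:
  assumes "0 < dL" "i < dL ^ n" "j < dL ^ n" "k < dL ^ n" "l < dL ^ n"
  shows "(\<Sum>a\<in>phase_points dL n. cnj (Dm dL n a i j) * Dm dL n a k l)
         = (if i = k \<and> j = l then of_nat (dL ^ n) else 0)"
proof -
  let ?f = "\<lambda>t y. cnj (Dq_entry dL y (digit dL n t i) (digit dL n t j)) * Dq_entry dL y (digit dL n t k) (digit dL n t l)"
  have "(\<Sum>a\<in>phase_points dL n. cnj (Dm dL n a i j) * Dm dL n a k l)
      = (\<Sum>a\<in>PiE {0..<n} (\<lambda>_. {0..<dL} \<times> {0..<dL}). \<Prod>t\<in>{0..<n}. ?f t (a t))"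
    unfolding phase_points_def Dm_def by (simp add: prod.distrib lessThan_atLeast0)
  also have "\<dots> = (\<Prod>t\<in>{0..<n}. \<Sum>y\<in>{0..<dL} \<times> {0..<dL}. ?f t y)"
    by (rule prod_sum_PiE[symmetric]) auto
  also have "\<dots> = (\<Prod>t\<in>{0..<n}. (if digit dL n t i = digit dL n t k \<and> digit dL n t j = digit dL n t l then of_nat dL else 0))"
    by (intro prod.cong refl Dq_CR) (auto simp: assms digit_lt)
  also have "\<dots> = (if (\<forall>t\<in>{0..<n}. digit dL n t i = digit dL n t k \<and> digit dL n t j = digit dL n t l) then of_nat dL ^ n else 0)"
    by (simp add: prod_if_const)
  also have "\<dots> = (if i = k \<and> j = l then of_nat (dL ^ n) else 0)"
    using digits_inj[of i dL n k] digits_inj[of j dL n l] assms by auto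
  finally show ?thesis .
qed



lemma w1: "cnj (omega dL ^ m) * omega dL ^ m = 1"
  by (metis omega_cnj complex_cnj_power power_mult_distrib power_one)

lemma Dq_norm1:
  assumes "0 < dL"
  shows "(\<Sum>y\<in>{0..<dL}. \<Sum>x\<in>{0..<dL}. cnj (Dq_entry dL b y x) * Dq_entry dL b y x) = of_nat dL"
proof -
  have "(\<Sum>y\<in>{0..<dL}. \<Sum>x\<in>{0..<dL}. cnj (Dq_entry dL b y x) * Dq_entry dL b y x)
      = (\<Sum>y\<in>{0..<dL}. \<Sum>x\<in>{0..<dL}. (if y = (x + fst b) mod dL then 1 else 0))"
    by (intro sum.cong refl) (simp add: Dq_prod w1)
  also have "\<dots> = (\<Sum>x\<in>{0..<dL}. \<Sum>y\<in>{0..<dL}. (if y = (x + fst b) mod dL then 1 else 0))"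
    by (rule sum.swap)
  also have "\<dots> = (\<Sum>x\<in>{0..<dL}. 1)"
    using assms by (intro sum.cong refl) (simp add: sum.delta')
  finally show ?thesis by simp
qed

lemma Dm_norm:
  assumes "0 < dL"
  shows "(\<Sum>i\<in>{0..<dL ^ n}. \<Sum>j\<in>{0..<dL ^ n}. cnj (Dm dL n a i j) * Dm dL n a i j) = of_nat (dL ^ n)"
proof -
  let ?P = "PiE {0..<n} (\<lambda>_. {0..<dL})"
  define h where "h t y x = cnj (Dq_entry dL (a t) y x) * Dq_entry dL (a t) y x" for t y x
  have e1: "cnj (Dm dL n a i j) * Dm dL n a i j = (\<Prod>t\<in>{0..<n}. h t (digs dL n i t) (digs dL n j t))" for i j
    unfolding Dm_def h_def digs_def by (simp add: prod.distrib lessThan_atLeast0)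
  have "(\<Sum>i\<in>{0..<dL ^ n}. \<Sum>j\<in>{0..<dL ^ n}. cnj (Dm dL n a i j) * Dm dL n a i j)
      = (\<Sum>i\<in>{0..<dL ^ n}. \<Sum>j\<in>{0..<dL ^ n}. \<Prod>t\<in>{0..<n}. h t (digs dL n i t) (digs dL n j t))"
    by (simp add: e1)
  also have "\<dots> = (\<Sum>i\<in>{0..<dL ^ n}. \<Sum>x\<in>?P. \<Prod>t\<in>{0..<n}. h t (digs dL n i t) (x t))"
    by (intro sum.cong refl sum.reindex_bij_betw[OF digs_bij[OF assms]])
  also have "\<dots> = (\<Sum>y\<in>?P. \<Sum>x\<in>?P. \<Prod>t\<in>{0..<n}. h t (y t) (x t))"
    by (rule sum.reindex_bij_betw[OF digs_bij[OF assms], where g = "\<lambda>y. \<Sum>x\<in>?P. \<Prod>t\<in>{0..<n}. h t (y t) (x t)"])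
  also have "\<dots> = (\<Sum>y\<in>?P. \<Prod>t\<in>{0..<n}. \<Sum>x\<in>{0..<dL}. h t (y t) x)"
    by (intro sum.cong refl prod_sum_PiE[symmetric]) auto
  also have "\<dots> = (\<Prod>t\<in>{0..<n}. \<Sum>y\<in>{0..<dL}. \<Sum>x\<in>{0..<dL}. h t y x)"
    by (rule prod_sum_PiE[symmetric]) auto
  also have "\<dots> = (\<Prod>t\<in>{0..<n}. of_nat dL)"
    unfolding h_def by (intro prod.cong refl Dq_norm1 assms)
  finally show ?thesis by simp
qed

definition zero_pt :: "nat \<Rightarrow> nat \<Rightarrow> nat \<times> nat" where
  "zero_pt n = restrict (\<lambda>_. (0, 0)) {0..<n}"

lemma zero_pt_in: "0 < dL \<Longrightarrow> zero_pt n \<in> phase_points dL n"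
  by (auto simp: zero_pt_def phase_points_def)

lemma Dm_zero:
  assumes "0 < dL" "i < dL ^ n" "j < dL ^ n"
  shows "Dm dL n (zero_pt n) i j = (if i = j then 1 else 0)"
proof -
  have "Dm dL n (zero_pt n) i j = (\<Prod>t\<in>{0..<n}. (if digit dL n t i = digit dL n t j then 1 else 0))"
    unfolding Dm_def zero_pt_def lessThan_atLeast0
    by (intro prod.cong refl) (simp add: Dq_entry_def digit_lt[OF assms(1)])
  also have "\<dots> = (if (\<forall>t\<in>{0..<n}. digit dL n t i = digit dL n t j) then 1 ^ n else 0)"
    by (simp add: prod_if_const)
  also have "\<dots> = (if i = j then 1 else 0)"
    using digits_inj[of i dL n j] assms by auto
  finally show ?thesis .
qed

lemma G1:
  fixes F :: "'a \<Rightarrow> 'b \<Rightarrow> complex"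
  assumes "finite P" "finite A"
    and CR: "\<And>p q. p \<in> A \<Longrightarrow> q \<in> A \<Longrightarrow> (\<Sum>a\<in>P. cnj (F a p) * F a q) = (if p = q then c else 0)"
  shows "(\<Sum>a\<in>P. (\<Sum>p\<in>A. cnj (F a p) * X p) * cnj (\<Sum>p\<in>A. cnj (F a p) * X p))
       = c * (\<Sum>p\<in>A. X p * cnj (X p))"
proof -
  have "(\<Sum>a\<in>P. (\<Sum>p\<in>A. cnj (F a p) * X p) * cnj (\<Sum>p\<in>A. cnj (F a p) * X p))
      = (\<Sum>a\<in>P. \<Sum>p\<in>A. \<Sum>q\<in>A. (cnj (F a p) * F a q) * (X p * cnj (X q)))"
    by (simp add: sum_product mult_ac)
  also have "\<dots> = (\<Sum>p\<in>A. \<Sum>a\<in>P. \<Sum>q\<in>A. (cnj (F a p) * F a q) * (X p * cnj (X q)))"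
    by (rule sum.swap)
  also have "\<dots> = (\<Sum>p\<in>A. \<Sum>q\<in>A. \<Sum>a\<in>P. (cnj (F a p) * F a q) * (X p * cnj (X q)))"
    by (intro sum.cong refl sum.swap)
  also have "\<dots> = (\<Sum>p\<in>A. \<Sum>q\<in>A. (if p = q then c else 0) * (X p * cnj (X q)))"
    by (intro sum.cong refl) (simp add: sum_distrib_right[symmetric] CR)
  also have "\<dots> = (\<Sum>p\<in>A. \<Sum>q\<in>A. (if p = q then c * (X p * cnj (X q)) else 0))"
    by (intro sum.cong refl) simp
  also have "\<dots> = (\<Sum>p\<in>A. c * (X p * cnj (X p)))"
    using assms(2) by (intro sum.cong refl) (simp add: sum.delta)
  finally show ?thesis by (simp add: sum_distrib_left)
qed

lemma G1':
  fixes F :: "'a \<Rightarrow> 'b \<Rightarrow> complex"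
  assumes "finite P" "finite A"
    and CR: "\<And>p q. p \<in> A \<Longrightarrow> q \<in> A \<Longrightarrow> (\<Sum>a\<in>P. cnj (F a p) * F a q) = (if p = q then c else 0)"
  shows "(\<Sum>a\<in>P. (\<Sum>p\<in>A. F a p * X p) * cnj (\<Sum>p\<in>A. F a p * X p))
       = c * (\<Sum>p\<in>A. X p * cnj (X p))"
proof -
  have e: "(\<Sum>p\<in>A. F a p * X p) * cnj (\<Sum>p\<in>A. F a p * X p)
      = (\<Sum>p\<in>A. cnj (F a p) * cnj (X p)) * cnj (\<Sum>p\<in>A. cnj (F a p) * cnj (X p))" for a
  proof -
    have 1: "cnj (\<Sum>p\<in>A. F a p * X p) = (\<Sum>p\<in>A. cnj (F a p) * cnj (X p))" by simp
    have 2: "cnj (\<Sum>p\<in>A. cnj (F a p) * cnj (X p)) = (\<Sum>p\<in>A. F a p * X p)" by simp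
    show ?thesis unfolding 1 2 by (rule mult.commute)
  qed
  have "(\<Sum>a\<in>P. (\<Sum>p\<in>A. F a p * X p) * cnj (\<Sum>p\<in>A. F a p * X p))
      = (\<Sum>a\<in>P. (\<Sum>p\<in>A. cnj (F a p) * cnj (X p)) * cnj (\<Sum>p\<in>A. cnj (F a p) * cnj (X p)))"
    by (simp only: e)
  also have "\<dots> = c * (\<Sum>p\<in>A. cnj (X p) * cnj (cnj (X p)))"
    by (rule G1[OF assms])
  finally show ?thesis by (simp add: mult.commute)
qed



definition FF :: "nat \<Rightarrow> nat \<Rightarrow> (nat \<Rightarrow> nat \<times> nat) \<Rightarrow> nat \<times> nat \<Rightarrow> complex" where
  "FF dL n a p = Dm dL n a (fst p) (snd p)"

definition YY :: "complex mat \<Rightarrow> nat \<times> nat \<Rightarrow> nat \<times> nat \<Rightarrow> complex" where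
  "YY U p q = U $$ (fst p, fst q) * cnj (U $$ (snd p, snd q))"

definition II :: "nat \<Rightarrow> (nat \<times> nat) set" where
  "II d = {0..<d} \<times> {0..<d}"

definition NN :: "nat \<Rightarrow> nat \<Rightarrow> complex mat \<Rightarrow> (nat \<Rightarrow> nat \<times> nat) \<Rightarrow> nat \<times> nat \<Rightarrow> complex" where
  "NN dL n U b p = (\<Sum>q\<in>II (dL ^ n). FF dL n b q * YY U p q)"

definition MM :: "nat \<Rightarrow> nat \<Rightarrow> complex mat \<Rightarrow> (nat \<Rightarrow> nat \<times> nat) \<Rightarrow> nat \<times> nat \<Rightarrow> complex" where
  "MM dL n U a q = (\<Sum>p\<in>II (dL ^ n). cnj (FF dL n a p) * YY U p q)"

lemma finite_II[simp]: "finite (II d)" by (simp add: II_def)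

lemma sum4:
  fixes f :: "nat \<Rightarrow> nat \<Rightarrow> nat \<Rightarrow> nat \<Rightarrow> complex"
  shows "(\<Sum>i\<in>I. \<Sum>l\<in>I. \<Sum>k\<in>I. \<Sum>j\<in>I. f j i k l) = (\<Sum>j\<in>I. \<Sum>i\<in>I. \<Sum>k\<in>I. \<Sum>l\<in>I. f j i k l)"
proof -
  have "(\<Sum>i\<in>I. \<Sum>l\<in>I. \<Sum>k\<in>I. \<Sum>j\<in>I. f j i k l) = (\<Sum>i\<in>I. \<Sum>l\<in>I. \<Sum>j\<in>I. \<Sum>k\<in>I. f j i k l)"
    by (intro sum.cong refl sum.swap)
  also have "\<dots> = (\<Sum>i\<in>I. \<Sum>j\<in>I. \<Sum>l\<in>I. \<Sum>k\<in>I. f j i k l)"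
    by (intro sum.cong refl sum.swap)
  also have "\<dots> = (\<Sum>i\<in>I. \<Sum>j\<in>I. \<Sum>k\<in>I. \<Sum>l\<in>I. f j i k l)"
    by (intro sum.cong refl sum.swap)
  also have "\<dots> = (\<Sum>j\<in>I. \<Sum>i\<in>I. \<Sum>k\<in>I. \<Sum>l\<in>I. f j i k l)"
    by (rule sum.swap)
  finally show ?thesis .
qed

lemma trace_raw:
  assumes U: "U \<in> carrier_mat (dL ^ n) (dL ^ n)"
  shows "mat_trace (mat_adjoint (displacement dL n a) * U * displacement dL n b * mat_adjoint U)
    = (\<Sum>i\<in>{0..<dL ^ n}. \<Sum>l\<in>{0..<dL ^ n}. \<Sum>k\<in>{0..<dL ^ n}. \<Sum>j\<in>{0..<dL ^ n}.
         cnj (Dm dL n a j i) * (Dm dL n b k l * (U $$ (j, k) * cnj (U $$ (i, l)))))"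
proof -
  let ?d = "dL ^ n"
  let ?A = "mat_adjoint (displacement dL n a)" and ?B = "displacement dL n b" and ?C = "mat_adjoint U"
  have A: "?A \<in> carrier_mat ?d ?d" by (intro adj_carrier displacement_carrier)
  have B: "?B \<in> carrier_mat ?d ?d" by (rule displacement_carrier)
  have C: "?C \<in> carrier_mat ?d ?d" by (intro adj_carrier U)
  have AU: "?A * U \<in> carrier_mat ?d ?d" using A U by simp
  have AUB: "?A * U * ?B \<in> carrier_mat ?d ?d" using AU B by simp
  have dim: "dim_row (?A * U * ?B * ?C) = ?d" using AUB C by (metis carrier_matD(1) mult_carrier_mat)
  have e: "(?A * U * ?B * ?C) $$ (i, i) = (\<Sum>l\<in>{0..<?d}. \<Sum>k\<in>{0..<?d}. \<Sum>j\<in>{0..<?d}.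
         cnj (Dm dL n a j i) * (Dm dL n b k l * (U $$ (j, k) * cnj (U $$ (i, l)))))" if i: "i < ?d" for i
  proof -
    have "(?A * U * ?B * ?C) $$ (i, i) = (\<Sum>l<?d. (?A * U * ?B) $$ (i, l) * ?C $$ (l, i))"
      by (rule mult_entry[OF AUB C i i])
    also have "\<dots> = (\<Sum>l<?d. (\<Sum>k<?d. (?A * U) $$ (i, k) * ?B $$ (k, l)) * ?C $$ (l, i))"
      by (intro sum.cong refl) (simp add: mult_entry[OF AU B i])
    also have "\<dots> = (\<Sum>l<?d. (\<Sum>k<?d. (\<Sum>j<?d. ?A $$ (i, j) * U $$ (j, k)) * ?B $$ (k, l)) * ?C $$ (l, i))"
      by (intro sum.cong refl) (simp add: mult_entry[OF A U i])
    also have "\<dots> = (\<Sum>l<?d. (\<Sum>k<?d. (\<Sum>j<?d. cnj (Dm dL n a j i) * U $$ (j, k)) * Dm dL n b k l) * cnj (U $$ (i, l)))"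
      using i by (intro sum.cong refl) (simp add: adj_entry[OF displacement_carrier] adj_entry[OF U] displacement_entry)
    also have "\<dots> = (\<Sum>l\<in>{0..<?d}. \<Sum>k\<in>{0..<?d}. \<Sum>j\<in>{0..<?d}.
         cnj (Dm dL n a j i) * U $$ (j, k) * Dm dL n b k l * cnj (U $$ (i, l)))"
      by (simp add: sum_distrib_right lessThan_atLeast0)
    also have "\<dots> = (\<Sum>l\<in>{0..<?d}. \<Sum>k\<in>{0..<?d}. \<Sum>j\<in>{0..<?d}.
         cnj (Dm dL n a j i) * (Dm dL n b k l * (U $$ (j, k) * cnj (U $$ (i, l)))))"
      by (intro sum.cong refl) (simp only: mult_ac)
    finally show ?thesis .
  qed
  show ?thesis unfolding mat_trace_def dim lessThan_atLeast0
  proof (rule sum.cong[OF refl])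
    fix i assume "i \<in> {0..<?d}"
    then have "i < ?d" by simp
    then show "(?A * U * ?B * ?C) $$ (i, i) = (\<Sum>l\<in>{0..<?d}. \<Sum>k\<in>{0..<?d}. \<Sum>j\<in>{0..<?d}.
         cnj (Dm dL n a j i) * (Dm dL n b k l * (U $$ (j, k) * cnj (U $$ (i, l)))))" by (rule e)
  qed
qed

lemma trace_pairs:
  assumes U: "U \<in> carrier_mat (dL ^ n) (dL ^ n)"
  shows "mat_trace (mat_adjoint (displacement dL n a) * U * displacement dL n b * mat_adjoint U)
    = (\<Sum>p\<in>II (dL ^ n). \<Sum>q\<in>II (dL ^ n). cnj (FF dL n a p) * (FF dL n b q * YY U p q))"
proof -
  have "(\<Sum>p\<in>II (dL ^ n). \<Sum>q\<in>II (dL ^ n). cnj (FF dL n a p) * (FF dL n b q * YY U p q))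
    = (\<Sum>j\<in>{0..<dL ^ n}. \<Sum>i\<in>{0..<dL ^ n}. \<Sum>k\<in>{0..<dL ^ n}. \<Sum>l\<in>{0..<dL ^ n}.
         cnj (Dm dL n a j i) * (Dm dL n b k l * (U $$ (j, k) * cnj (U $$ (i, l)))))"
    unfolding II_def by (simp only: sum.cartesian_product' FF_def YY_def fst_conv snd_conv)
  then show ?thesis by (rule trans[OF trans[OF trace_raw[OF U] sum4] sym])
qed

lemma trace_N:
  assumes U: "U \<in> carrier_mat (dL ^ n) (dL ^ n)"
  shows "mat_trace (mat_adjoint (displacement dL n a) * U * displacement dL n b * mat_adjoint U)
    = (\<Sum>p\<in>II (dL ^ n). cnj (FF dL n a p) * NN dL n U b p)"
  unfolding trace_pairs[OF U] NN_def sum_distrib_left ..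

lemma trace_M:
  assumes U: "U \<in> carrier_mat (dL ^ n) (dL ^ n)"
  shows "mat_trace (mat_adjoint (displacement dL n a) * U * displacement dL n b * mat_adjoint U)
    = (\<Sum>q\<in>II (dL ^ n). FF dL n b q * MM dL n U a q)"
proof -
  have "mat_trace (mat_adjoint (displacement dL n a) * U * displacement dL n b * mat_adjoint U)
      = (\<Sum>q\<in>II (dL ^ n). \<Sum>p\<in>II (dL ^ n). cnj (FF dL n a p) * (FF dL n b q * YY U p q))"
    unfolding trace_pairs[OF U] by (rule sum.swap)
  also have "\<dots> = (\<Sum>q\<in>II (dL ^ n). FF dL n b q * MM dL n U a q)"
    unfolding MM_def sum_distrib_left by (intro sum.cong refl) (simp only: mult_ac)
  finally show ?thesis .
qed



lemma finite_pp[simp]: "finite (phase_points dL n)"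
  by (simp add: phase_points_def finite_PiE)

lemma card_pp: "card (phase_points dL n) = (dL ^ n) ^ 2"
  by (simp add: phase_points_def card_PiE power2_eq_square power_mult_distrib)

lemma CR_FF:
  assumes "0 < dL" "p \<in> II (dL ^ n)" "q \<in> II (dL ^ n)"
  shows "(\<Sum>a\<in>phase_points dL n. cnj (FF dL n a p) * FF dL n a q) = (if p = q then of_nat (dL ^ n) else 0)"
  using Dm_CR[of dL "fst p" n "snd p" "fst q" "snd q"] assms
  by (auto simp: FF_def II_def prod_eq_iff)

lemma frakD_cx:
  "complex_of_real (frakD dL n U a b) =
    mat_trace (mat_adjoint (displacement dL n a) * U * displacement dL n b * mat_adjoint U) *
    cnj (mat_trace (mat_adjoint (displacement dL n a) * U * displacement dL n b * mat_adjoint U))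
    / (of_nat (dL ^ n))\<^sup>2"
  unfolding frakD_def frakC_def complex_norm_square by (simp add: power2_eq_square complex_cnj_power)

lemma col_sum:
  assumes "0 < dL" "U \<in> carrier_mat (dL ^ n) (dL ^ n)"
  shows "complex_of_real (\<Sum>a\<in>phase_points dL n. frakD dL n U a b)
     = (\<Sum>p\<in>II (dL ^ n). NN dL n U b p * cnj (NN dL n U b p)) / of_nat (dL ^ n)"
proof -
  have "complex_of_real (\<Sum>a\<in>phase_points dL n. frakD dL n U a b)
     = (\<Sum>a\<in>phase_points dL n. (\<Sum>p\<in>II (dL ^ n). cnj (FF dL n a p) * NN dL n U b p) *
          cnj (\<Sum>p\<in>II (dL ^ n). cnj (FF dL n a p) * NN dL n U b p)) / (of_nat (dL ^ n))\<^sup>2"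
    by (simp add: frakD_cx trace_N[OF assms(2)] sum_divide_distrib)
  also have "\<dots> = of_nat (dL ^ n) * (\<Sum>p\<in>II (dL ^ n). NN dL n U b p * cnj (NN dL n U b p)) / (of_nat (dL ^ n))\<^sup>2"
    by (simp only: G1[OF finite_pp finite_II CR_FF[OF assms(1)]])
  also have "\<dots> = (\<Sum>p\<in>II (dL ^ n). NN dL n U b p * cnj (NN dL n U b p)) / of_nat (dL ^ n)"
    using assms(1) by (simp add: power2_eq_square)
  finally show ?thesis .
qed

lemma row_sum:
  assumes "0 < dL" "U \<in> carrier_mat (dL ^ n) (dL ^ n)"
  shows "complex_of_real (\<Sum>b\<in>phase_points dL n. frakD dL n U a b)
     = (\<Sum>q\<in>II (dL ^ n). MM dL n U a q * cnj (MM dL n U a q)) / of_nat (dL ^ n)"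
proof -
  have "complex_of_real (\<Sum>b\<in>phase_points dL n. frakD dL n U a b)
     = (\<Sum>b\<in>phase_points dL n. (\<Sum>q\<in>II (dL ^ n). FF dL n b q * MM dL n U a q) *
          cnj (\<Sum>q\<in>II (dL ^ n). FF dL n b q * MM dL n U a q)) / (of_nat (dL ^ n))\<^sup>2"
    by (simp add: frakD_cx trace_M[OF assms(2)] sum_divide_distrib)
  also have "\<dots> = of_nat (dL ^ n) * (\<Sum>q\<in>II (dL ^ n). MM dL n U a q * cnj (MM dL n U a q)) / (of_nat (dL ^ n))\<^sup>2"
    by (simp only: G1'[OF finite_pp finite_II CR_FF[OF assms(1)]])
  also have "\<dots> = (\<Sum>q\<in>II (dL ^ n). MM dL n U a q * cnj (MM dL n U a q)) / of_nat (dL ^ n)"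
    using assms(1) by (simp add: power2_eq_square)
  finally show ?thesis .
qed

lemma FF_norm:
  assumes "0 < dL"
  shows "(\<Sum>q\<in>II (dL ^ n). FF dL n b q * cnj (FF dL n b q)) = of_nat (dL ^ n)"
  using Dm_norm[OF assms, of n b]
  by (simp add: II_def FF_def sum.cartesian_product' mult.commute)

lemma O1:
  assumes U: "U \<in> carrier_mat d d" and h: "mat_adjoint U * U = 1\<^sub>m d" and "k < d" "k' < d"
  shows "(\<Sum>j\<in>{0..<d}. cnj (U $$ (j, k)) * U $$ (j, k')) = (if k = k' then 1 else 0)"
proof -
  have "(mat_adjoint U * U) $$ (k, k') = (\<Sum>j<d. mat_adjoint U $$ (k, j) * U $$ (j, k'))"
    by (rule mult_entry[OF adj_carrier[OF U] U assms(3,4)])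
  also have "\<dots> = (\<Sum>j\<in>{0..<d}. cnj (U $$ (j, k)) * U $$ (j, k'))"
    using assms by (simp add: adj_entry[OF U] lessThan_atLeast0)
  finally show ?thesis using h assms by simp
qed

lemma O2:
  assumes U: "U \<in> carrier_mat d d" and h: "U * mat_adjoint U = 1\<^sub>m d" and "j < d" "j' < d"
  shows "(\<Sum>k\<in>{0..<d}. U $$ (j, k) * cnj (U $$ (j', k))) = (if j = j' then 1 else 0)"
proof -
  have "(U * mat_adjoint U) $$ (j, j') = (\<Sum>k<d. U $$ (j, k) * mat_adjoint U $$ (k, j'))"
    by (rule mult_entry[OF U adj_carrier[OF U] assms(3,4)])
  also have "\<dots> = (\<Sum>k\<in>{0..<d}. U $$ (j, k) * cnj (U $$ (j', k)))"
    using assms by (simp add: adj_entry[OF U] lessThan_atLeast0)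
  finally show ?thesis using h assms by simp
qed

lemma CR1:
  assumes U: "U \<in> carrier_mat d d" and h: "mat_adjoint U * U = 1\<^sub>m d"
    and q: "q \<in> II d" "q' \<in> II d"
  shows "(\<Sum>p\<in>II d. cnj (YY U p q) * YY U p q') = (if q = q' then 1 else 0)"
proof -
  obtain k l k' l' where qq: "q = (k, l)" "q' = (k', l')" by (cases q, cases q') auto
  have kl: "k < d" "l < d" "k' < d" "l' < d" using q qq by (auto simp: II_def)
  have "(\<Sum>p\<in>II d. cnj (YY U p q) * YY U p q')
      = (\<Sum>j\<in>{0..<d}. \<Sum>i\<in>{0..<d}. (cnj (U $$ (j, k)) * U $$ (j, k')) * cnj (cnj (U $$ (i, l)) * U $$ (i, l')))"
    unfolding II_def sum.cartesian_product' YY_def qq by (intro sum.cong refl) (simp add: mult_ac)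
  also have "\<dots> = (\<Sum>j\<in>{0..<d}. cnj (U $$ (j, k)) * U $$ (j, k')) * cnj (\<Sum>i\<in>{0..<d}. cnj (U $$ (i, l)) * U $$ (i, l'))"
    by (simp add: sum_product)
  also have "\<dots> = (if q = q' then 1 else 0)"
    using O1[OF U h] kl qq by auto
  finally show ?thesis .
qed

lemma CR2:
  assumes U: "U \<in> carrier_mat d d" and h: "U * mat_adjoint U = 1\<^sub>m d"
    and p: "p \<in> II d" "p' \<in> II d"
  shows "(\<Sum>q\<in>II d. cnj (YY U p q) * YY U p' q) = (if p = p' then 1 else 0)"
proof -
  obtain j i j' i' where pp: "p = (j, i)" "p' = (j', i')" by (cases p, cases p') auto
  have ji: "j < d" "i < d" "j' < d" "i' < d" using p pp by (auto simp: II_def)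
  have "(\<Sum>q\<in>II d. cnj (YY U p q) * YY U p' q)
      = (\<Sum>k\<in>{0..<d}. \<Sum>l\<in>{0..<d}. (U $$ (j', k) * cnj (U $$ (j, k))) * (U $$ (i, l) * cnj (U $$ (i', l))))"
    unfolding II_def sum.cartesian_product' YY_def pp by (intro sum.cong refl) (simp add: mult_ac)
  also have "\<dots> = (\<Sum>k\<in>{0..<d}. U $$ (j', k) * cnj (U $$ (j, k))) * (\<Sum>l\<in>{0..<d}. U $$ (i, l) * cnj (U $$ (i', l)))"
    by (simp add: sum_product)
  also have "\<dots> = (if p = p' then 1 else 0)"
    using O2[OF U h] ji pp by auto
  finally show ?thesis .
qed

lemma NN_norm:
  assumes U: "U \<in> carrier_mat (dL ^ n) (dL ^ n)" and h: "mat_adjoint U * U = 1\<^sub>m (dL ^ n)"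
  shows "(\<Sum>p\<in>II (dL ^ n). NN dL n U b p * cnj (NN dL n U b p))
       = (\<Sum>q\<in>II (dL ^ n). FF dL n b q * cnj (FF dL n b q))"
proof -
  have "NN dL n U b p = (\<Sum>q\<in>II (dL ^ n). YY U p q * FF dL n b q)" for p
    unfolding NN_def by (simp add: mult.commute)
  then have "(\<Sum>p\<in>II (dL ^ n). NN dL n U b p * cnj (NN dL n U b p))
     = (\<Sum>p\<in>II (dL ^ n). (\<Sum>q\<in>II (dL ^ n). YY U p q * FF dL n b q) * cnj (\<Sum>q\<in>II (dL ^ n). YY U p q * FF dL n b q))"
    by simp
  also have "\<dots> = 1 * (\<Sum>q\<in>II (dL ^ n). FF dL n b q * cnj (FF dL n b q))"
    by (rule G1'[OF finite_II finite_II CR1[OF U h]])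
  finally show ?thesis by simp
qed

lemma MM_norm:
  assumes U: "U \<in> carrier_mat (dL ^ n) (dL ^ n)" and h: "U * mat_adjoint U = 1\<^sub>m (dL ^ n)"
  shows "(\<Sum>q\<in>II (dL ^ n). MM dL n U a q * cnj (MM dL n U a q))
       = (\<Sum>p\<in>II (dL ^ n). FF dL n a p * cnj (FF dL n a p))"
proof -
  have "MM dL n U a q = (\<Sum>p\<in>II (dL ^ n). YY U p q * cnj (FF dL n a p))" for q
    unfolding MM_def by (simp add: mult.commute)
  then have "(\<Sum>q\<in>II (dL ^ n). MM dL n U a q * cnj (MM dL n U a q))
     = (\<Sum>q\<in>II (dL ^ n). (\<Sum>p\<in>II (dL ^ n). YY U p q * cnj (FF dL n a p)) * cnj (\<Sum>p\<in>II (dL ^ n). YY U p q * cnj (FF dL n a p)))"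
    by simp
  also have "\<dots> = 1 * (\<Sum>p\<in>II (dL ^ n). cnj (FF dL n a p) * cnj (cnj (FF dL n a p)))"
    by (rule G1'[OF finite_II finite_II CR2[OF U h]])
  finally show ?thesis by (simp add: mult.commute)
qed

lemma fwd:
  assumes "0 < dL" and U: "U \<in> carrier_mat (dL ^ n) (dL ^ n)" and "unitary_mat U"
  shows "bistochastic (phase_points dL n) (frakD dL n U)"
proof -
  obtain d' where d': "U \<in> carrier_mat d' d'" "U * mat_adjoint U = 1\<^sub>m d'" "mat_adjoint U * U = 1\<^sub>m d'"
    using assms(3) unfolding unitary_mat_def by blast
  have "d' = dL ^ n" using d'(1) U by auto
  then have h1: "U * mat_adjoint U = 1\<^sub>m (dL ^ n)" and h2: "mat_adjoint U * U = 1\<^sub>m (dL ^ n)"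
    using d' by auto
  have dpos: "(of_nat (dL ^ n) :: complex) \<noteq> 0" using assms(1) by simp
  have rows: "(\<Sum>b\<in>phase_points dL n. frakD dL n U a b) = 1" for a
  proof -
    have "complex_of_real (\<Sum>b\<in>phase_points dL n. frakD dL n U a b) = 1"
      unfolding row_sum[OF assms(1) U] MM_norm[OF U h1] FF_norm[OF assms(1)] using dpos by simp
    then show ?thesis by (simp only: of_real_eq_1_iff)
  qed
  have cols: "(\<Sum>a\<in>phase_points dL n. frakD dL n U a b) = 1" for b
  proof -
    have "complex_of_real (\<Sum>a\<in>phase_points dL n. frakD dL n U a b) = 1"
      unfolding col_sum[OF assms(1) U] NN_norm[OF U h2] FF_norm[OF assms(1)] using dpos by simp
    then show ?thesis by (simp only: of_real_eq_1_iff)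
  qed
  show ?thesis unfolding bistochastic_def using rows cols by (simp add: frakD_def)
qed

definition QQ :: "nat \<Rightarrow> complex mat \<Rightarrow> nat \<times> nat \<Rightarrow> complex" where
  "QQ d U p = (\<Sum>k\<in>{0..<d}. U $$ (fst p, k) * cnj (U $$ (snd p, k)))"

definition SS :: "nat \<Rightarrow> complex mat \<Rightarrow> complex" where
  "SS d U = (\<Sum>p\<in>II d. U $$ p * cnj (U $$ p))"

lemma NN_zero:
  assumes "0 < dL" "p \<in> II (dL ^ n)"
  shows "NN dL n U (zero_pt n) p = QQ (dL ^ n) U p"
proof -
  have "NN dL n U (zero_pt n) p = (\<Sum>k\<in>{0..<dL ^ n}. \<Sum>l\<in>{0..<dL ^ n}.
      (if k = l then U $$ (fst p, k) * cnj (U $$ (snd p, l)) else 0))"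
    unfolding NN_def II_def sum.cartesian_product' FF_def YY_def
    by (intro sum.cong refl) (simp add: Dm_zero[OF assms(1)])
  also have "\<dots> = QQ (dL ^ n) U p"
    unfolding QQ_def by (intro sum.cong refl) (simp add: sum.delta)
  finally show ?thesis .
qed

lemma YY_sq:
  "(\<Sum>p\<in>II d. \<Sum>q\<in>II d. YY U p q * cnj (YY U p q)) = SS d U ^ 2"
proof -
  let ?g = "\<lambda>j k. U $$ (j, k) * cnj (U $$ (j, k))"
  have "(\<Sum>p\<in>II d. \<Sum>q\<in>II d. YY U p q * cnj (YY U p q))
      = (\<Sum>j\<in>{0..<d}. \<Sum>i\<in>{0..<d}. \<Sum>k\<in>{0..<d}. \<Sum>l\<in>{0..<d}. ?g j k * ?g i l)"
    unfolding II_def sum.cartesian_product' YY_def by (intro sum.cong refl) (simp add: mult_ac)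
  also have "\<dots> = SS d U * SS d U"
    unfolding SS_def II_def sum.cartesian_product' by (simp add: sum_product)
  finally show ?thesis by (simp add: power2_eq_square)
qed

lemma sum_all_b:
  assumes "0 < dL"
  shows "(\<Sum>b\<in>phase_points dL n. \<Sum>p\<in>II (dL ^ n). NN dL n U b p * cnj (NN dL n U b p))
     = of_nat (dL ^ n) * SS (dL ^ n) U ^ 2"
proof -
  have "(\<Sum>b\<in>phase_points dL n. \<Sum>p\<in>II (dL ^ n). NN dL n U b p * cnj (NN dL n U b p))
     = (\<Sum>p\<in>II (dL ^ n). \<Sum>b\<in>phase_points dL n. NN dL n U b p * cnj (NN dL n U b p))"
    by (rule sum.swap)
  also have "\<dots> = (\<Sum>p\<in>II (dL ^ n). of_nat (dL ^ n) * (\<Sum>q\<in>II (dL ^ n). YY U p q * cnj (YY U p q)))"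
    unfolding NN_def by (intro sum.cong refl G1'[OF finite_pp finite_II CR_FF[OF assms(1)]])
  also have "\<dots> = of_nat (dL ^ n) * SS (dL ^ n) U ^ 2"
    by (simp add: sum_distrib_left[symmetric] YY_sq)
  finally show ?thesis .
qed

lemma SS_real: "SS d U = of_real (\<Sum>p\<in>II d. (cmod (U $$ p))\<^sup>2)"
  unfolding SS_def by (simp only: of_real_sum complex_norm_square)

lemma delta_sum:
  "(\<Sum>p\<in>II d. (if fst p = snd p then f p else 0)) = (\<Sum>j\<in>{0..<d}. f (j, j))"
  unfolding II_def sum.cartesian_product' by (intro sum.cong refl) (simp add: sum.delta)

lemma bwd:
  assumes dL: "0 < dL" and U: "U \<in> carrier_mat (dL ^ n) (dL ^ n)"
    and bs: "bistochastic (phase_points dL n) (frakD dL n U)"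
  shows "unitary_mat U"
proof -
  let ?d = "dL ^ n"
  let ?D = "of_nat ?d :: complex"
  have dpos: "?D \<noteq> 0" using dL by simp
  have colN: "(\<Sum>p\<in>II ?d. NN dL n U b p * cnj (NN dL n U b p)) = ?D" if b: "b \<in> phase_points dL n" for b
  proof -
    have "(\<Sum>a\<in>phase_points dL n. frakD dL n U a b) = 1" using bs b unfolding bistochastic_def by blast
    then have "(\<Sum>p\<in>II ?d. NN dL n U b p * cnj (NN dL n U b p)) / ?D = 1"
      using col_sum[OF dL U, of b] by simp
    then show ?thesis using dpos by (simp add: divide_eq_1_iff)
  qed
  have Q2: "(\<Sum>p\<in>II ?d. QQ ?d U p * cnj (QQ ?d U p)) = ?D"
    using colN[OF zero_pt_in[OF dL]] NN_zero[OF dL] by simp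
  have "(\<Sum>b\<in>phase_points dL n. \<Sum>p\<in>II ?d. NN dL n U b p * cnj (NN dL n U b p))
      = (\<Sum>b\<in>phase_points dL n. ?D)"
    by (intro sum.cong refl colN)
  also have "\<dots> = ?D * ?D ^ 2" by (simp add: card_pp)
  finally have "?D * SS ?d U ^ 2 = ?D * ?D ^ 2" using sum_all_b[OF dL, of n U] by simp
  then have S2: "SS ?d U ^ 2 = ?D ^ 2" using dpos mult_left_cancel by blast
  define r where "r = (\<Sum>p\<in>II ?d. (cmod (U $$ p))\<^sup>2)"
  have Sr: "SS ?d U = of_real r" unfolding r_def by (rule SS_real)
  have r0: "0 \<le> r" unfolding r_def by (intro sum_nonneg) simp
  have "of_real (r ^ 2) = (of_real (real ?d ^ 2) :: complex)" using S2 Sr by simp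
  then have "r ^ 2 = real ?d ^ 2" by (simp only: of_real_eq_iff)
  then have "r = real ?d" using r0 by (simp add: power2_eq_iff_nonneg)
  then have S: "SS ?d U = ?D" using Sr by simp
  define del where "del p = (if fst p = snd p then 1 else (0::complex))" for p :: "nat \<times> nat"
  have trQ: "(\<Sum>p\<in>II ?d. del p * QQ ?d U p) = ?D"
  proof -
    have "(\<Sum>p\<in>II ?d. del p * QQ ?d U p) = (\<Sum>p\<in>II ?d. (if fst p = snd p then QQ ?d U p else 0))"
      by (intro sum.cong refl) (simp add: del_def)
    also have "\<dots> = (\<Sum>j\<in>{0..<?d}. QQ ?d U (j, j))"
      by (rule delta_sum)
    also have "\<dots> = SS ?d U"
      unfolding QQ_def SS_def II_def sum.cartesian_product' by simp
    finally show ?thesis using S by simp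
  qed
  have trQc: "(\<Sum>p\<in>II ?d. del p * cnj (QQ ?d U p)) = ?D"
  proof -
    have "(\<Sum>p\<in>II ?d. del p * cnj (QQ ?d U p)) = cnj (\<Sum>p\<in>II ?d. del p * QQ ?d U p)"
      unfolding cnj_sum complex_cnj_mult by (intro sum.cong refl) (simp add: del_def)
    then show ?thesis using trQ by (simp add: complex_cnj_power)
  qed
  have trd: "(\<Sum>p\<in>II ?d. del p) = ?D"
    unfolding del_def using delta_sum[where d = "?d" and f = "\<lambda>_. 1::complex"] by simp
  have "(\<Sum>p\<in>II ?d. (QQ ?d U p - del p) * cnj (QQ ?d U p - del p))
      = (\<Sum>p\<in>II ?d. QQ ?d U p * cnj (QQ ?d U p) - del p * cnj (QQ ?d U p) - del p * QQ ?d U p + del p)"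
    by (intro sum.cong refl) (simp add: del_def algebra_simps)
  also have "\<dots> = 0"
    by (simp add: sum.distrib sum_subtractf Q2 trQ trQc trd)
  finally have "(\<Sum>p\<in>II ?d. complex_of_real ((cmod (QQ ?d U p - del p))\<^sup>2)) = 0"
    by (simp only: complex_norm_square)
  then have "(\<Sum>p\<in>II ?d. (cmod (QQ ?d U p - del p))\<^sup>2) = 0"
    by (simp only: of_real_sum[symmetric] of_real_eq_0_iff)
  then have Qd: "QQ ?d U p = del p" if "p \<in> II ?d" for p
    using that by (subst (asm) sum_nonneg_eq_0_iff) auto
  have C: "mat_adjoint U \<in> carrier_mat ?d ?d" by (rule adj_carrier[OF U])
  have h1: "U * mat_adjoint U = 1\<^sub>m ?d"
  proof (rule eq_matI)
    fix j i assume ji: "j < dim_row (1\<^sub>m ?d)" "i < dim_col (1\<^sub>m ?d)"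
    then have ji': "j < ?d" "i < ?d" by auto
    have "(U * mat_adjoint U) $$ (j, i) = (\<Sum>k<?d. U $$ (j, k) * mat_adjoint U $$ (k, i))"
      by (rule mult_entry[OF U C ji'])
    also have "\<dots> = QQ ?d U (j, i)"
      unfolding QQ_def using ji' by (simp add: adj_entry[OF U] lessThan_atLeast0)
    also have "\<dots> = del (j, i)" using Qd ji' by (simp add: II_def)
    finally show "(U * mat_adjoint U) $$ (j, i) = 1\<^sub>m ?d $$ (j, i)"
      using ji' by (simp add: del_def)
  next
    show "dim_row (U * mat_adjoint U) = dim_row (1\<^sub>m ?d)" using U by simp
    show "dim_col (U * mat_adjoint U) = dim_col (1\<^sub>m ?d)" using C by simp
  qed
  have h2: "mat_adjoint U * U = 1\<^sub>m ?d"
    by (rule mat_mult_left_right_inverse[OF U C h1])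
  show ?thesis unfolding unitary_mat_def using U h1 h2 by blast
qed


theorem lemma1:
  fixes dL n :: nat and U :: "complex mat"
  assumes "dL \<ge> 2" and "n \<ge> 1"
    and "U \<in> carrier_mat (dL ^ n) (dL ^ n)"
  shows "bistochastic (phase_points dL n) (frakD dL n U) \<longleftrightarrow> unitary_mat U"
proof -
  have dL: "0 < dL" using assms(1) by simp
  show ?thesis using fwd[OF dL assms(3)] bwd[OF dL assms(3)] by blast
qed

end
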